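(* Let $g\ge2$, $A\ge1$, $k\ge1$ and let $f_1(q),\dots,f_g(q)$ be power series with complex coefficients, each of order of magnitude $(A,k)$. Then the wronskian $W_{\mathbf f}(q)$ is a power series of order of magnitude $\left(g!\,A^g\,2^{\frac{g(g-1)(g+3k-2)}{6}},\ gk-1+\frac{g(g+1)}{2}\right)$.
   Context: A power series $h=\sum_{m\ge0}h_mq^m$ has order of magnitude $(A,n)$ ($A\ge1$ real, $n\ge1$ integer) if $|h_m|\le A(m+1)^n$ for all $m$. For $\mathbf f=(f_1,\dots,f_g)$ the wronskian is $W_{\mathbf f}(q)=\det\big(f_j^{(i)}(q)\big)_{0\le i\le g-1,\,1\le j\le g}$, where $f^{(i)}$ is the $i$-th derivative. *)

theory Defs
  imports "HOL-Computational_Algebra.Formal_Power_Series" "Jordan_Normal_Form.Determinant"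
begin

definition order_of_magnitude :: "complex fps \<Rightarrow> real \<Rightarrow> nat \<Rightarrow> bool" where
  "order_of_magnitude h A n \<longleftrightarrow> A \<ge> 1 \<and> n \<ge> 1 \<and>
     (\<forall>m. norm (fps_nth h m) \<le> A * (real m + 1) ^ n)"

definition wronskian :: "nat \<Rightarrow> (nat \<Rightarrow> complex fps) \<Rightarrow> complex fps" where
  "wronskian g f = det (mat g g (\<lambda>(i, j). (fps_deriv ^^ i) (f j)))"

end

theory Submission
  imports Defs
begin

definition bnd :: "complex fps \<Rightarrow> real \<Rightarrow> nat \<Rightarrow> bool" where
  "bnd h C e \<longleftrightarrow> (\<forall>m. norm (fps_nth h m) \<le> C * (real m + 1) ^ e)"

lemma bnd_nonneg: "bnd h C e \<Longrightarrow> C \<ge> 0"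
  unfolding bnd_def by (metis mult.right_neutral norm_ge_zero of_nat_0 power_one add_0 order_trans)

lemma bnd_mono: "bnd h C e \<Longrightarrow> C \<le> C' \<Longrightarrow> e \<le> e' \<Longrightarrow> bnd h C' e'"
  unfolding bnd_def
proof safe
  fix m assume H: "\<forall>m. norm (fps_nth h m) \<le> C * (real m + 1) ^ e" "C \<le> C'" "e \<le> e'"
  have C0: "C \<ge> 0" using bnd_nonneg[of h C e] H unfolding bnd_def by auto
  have "norm (fps_nth h m) \<le> C * (real m + 1) ^ e" using H by auto
  also have "\<dots> \<le> C' * (real m + 1) ^ e'"
    by (rule mult_mono) (use H C0 in \<open>auto intro: power_increasing\<close>)
  finally show "norm (fps_nth h m) \<le> C' * (real m + 1) ^ e'" .
qed

lemma bnd_mult: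
  assumes a: "bnd a C e1" and b: "bnd b D e2"
  shows "bnd (a * b) (C * D) (e1 + e2 + 1)"
  unfolding bnd_def
proof
  fix m
  have C0: "C \<ge> 0" using bnd_nonneg[OF a] .
  have D0: "D \<ge> 0" using bnd_nonneg[OF b] .
  have "norm (fps_nth (a * b) m) = norm (\<Sum>i=0..m. fps_nth a i * fps_nth b (m - i))" by (simp add: fps_mult_nth)
  also have "\<dots> \<le> (\<Sum>i=0..m. norm (fps_nth a i) * norm (fps_nth b (m - i)))"
    by (rule order_trans[OF norm_sum]) (simp add: norm_mult)
  also have "\<dots> \<le> (\<Sum>i=0..m. (C * D) * (real m + 1) ^ (e1 + e2))"
  proof (rule sum_mono)
    fix i assume i: "i \<in> {0..m}"
    have "norm (fps_nth a i) \<le> C * (real i + 1) ^ e1" using a unfolding bnd_def by auto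
    also have "\<dots> \<le> C * (real m + 1) ^ e1"
      using i C0 by (auto intro!: mult_left_mono power_mono)
    finally have 1: "norm (fps_nth a i) \<le> C * (real m + 1) ^ e1" .
    have "norm (fps_nth b (m-i)) \<le> D * (real (m-i) + 1) ^ e2" using b unfolding bnd_def by auto
    also have "\<dots> \<le> D * (real m + 1) ^ e2"
      using i D0 by (auto intro!: mult_left_mono power_mono)
    finally have 2: "norm (fps_nth b (m-i)) \<le> D * (real m + 1) ^ e2" .
    have "norm (fps_nth a i) * norm (fps_nth b (m - i)) \<le> (C * (real m + 1) ^ e1) * (D * (real m + 1) ^ e2)"
      by (rule mult_mono[OF 1 2]) (use C0 in auto)
    also have "\<dots> = (C * D) * (real m + 1) ^ (e1 + e2)" by (simp add: power_add)
    finally show "norm (fps_nth a i) * norm (fps_nth b (m - i)) \<le> (C * D) * (real m + 1) ^ (e1 + e2)" .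
  qed
  also have "\<dots> = (C * D) * (real m + 1) ^ (e1 + e2 + 1)" by (simp add: algebra_simps)
  finally show "norm (fps_nth (a * b) m) \<le> (C * D) * (real m + 1) ^ (e1 + e2 + 1)" .
qed

lemma bnd_deriv:
  assumes h: "bnd h C e"
  shows "bnd (fps_deriv h) (2 ^ e * C) (e + 1)"
  unfolding bnd_def
proof
  fix m
  have C0: "C \<ge> 0" using bnd_nonneg[OF h] .
  have nn: "norm (of_nat (m + 1) :: complex) = real m + 1" by (simp only: norm_of_nat)
  have "norm (fps_nth (fps_deriv h) m) = (real m + 1) * norm (fps_nth h (m+1))"
    by (simp only: fps_deriv_nth norm_mult nn)
  also have "\<dots> \<le> (real m + 1) * (C * (real (m+1) + 1) ^ e)"
    using h[unfolded bnd_def, rule_format, of "m+1"] by (intro mult_left_mono) auto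
  also have "\<dots> \<le> (real m + 1) * (C * (2 * (real m + 1)) ^ e)"
    using C0 by (intro mult_left_mono power_mono) auto
  also have "\<dots> = (2 ^ e * C) * (real m + 1) ^ (e + 1)" by (subst power_mult_distrib) (simp add: algebra_simps)
  finally show "norm (fps_nth (fps_deriv h) m) \<le> (2 ^ e * C) * (real m + 1) ^ (e + 1)" .
qed

lemma bnd_iter:
  assumes h: "bnd h C e"
  shows "bnd ((fps_deriv ^^ i) h) (2 ^ (\<Sum>j<i. e + j) * C) (e + i)"
proof (induction i)
  case 0 then show ?case using h by simp
next
  case (Suc i)
  from bnd_deriv[OF Suc] show ?case by (simp add: power_add algebra_simps)
qed

lemma bnd_prod:
  assumes "\<And>i. i < n \<Longrightarrow> bnd (h i) (C i) (e i)" and "n \<ge> 1"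
  shows "bnd (\<Prod>i=0..<n. h i) (\<Prod>i=0..<n. C i) ((\<Sum>i=0..<n. e i) + (n - 1))"
  using assms
proof (induction n)
  case 0 then show ?case by simp
next
  case (Suc n)
  show ?case
  proof (cases "n = 0")
    case True then show ?thesis using Suc.prems by simp
  next
    case False
    have IH: "bnd (\<Prod>i=0..<n. h i) (\<Prod>i=0..<n. C i) ((\<Sum>i=0..<n. e i) + (n - 1))"
      using Suc False by auto
    from bnd_mult[OF IH Suc.prems(1)[of n]] show ?thesis using False
      by (simp add: algebra_simps)
  qed
qed

lemma bnd_sum:
  assumes "finite S" "\<And>x. x \<in> S \<Longrightarrow> bnd (h x) C e" "C \<ge> 0"
  shows "bnd (\<Sum>x\<in>S. h x) (real (card S) * C) e"
  using assms
proof (induction S rule: finite_induct)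
  case empty then show ?case by (simp add: bnd_def)
next
  case (insert x F)
  have 1: "bnd (h x) C e" using insert by auto
  have 2: "bnd (\<Sum>x\<in>F. h x) (real (card F) * C) e" using insert by auto
  show ?case unfolding bnd_def
  proof
    fix m
    have "norm (fps_nth (\<Sum>x\<in>insert x F. h x) m) = norm (fps_nth (h x) m + fps_nth (\<Sum>x\<in>F. h x) m)"
      using insert by simp
    also have "\<dots> \<le> norm (fps_nth (h x) m) + norm (fps_nth (\<Sum>x\<in>F. h x) m)" by (rule norm_triangle_ineq)
    also have "\<dots> \<le> C * (real m + 1) ^ e + real (card F) * C * (real m + 1) ^ e"
      using 1 2 unfolding bnd_def by (intro add_mono) auto
    also have "\<dots> = real (card (insert x F)) * C * (real m + 1) ^ e"
      using insert by (simp add: algebra_simps)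
    finally show "norm (fps_nth (\<Sum>x\<in>insert x F. h x) m) \<le> real (card (insert x F)) * C * (real m + 1) ^ e" .
  qed
qed

lemma bnd_sign: "bnd h C e \<Longrightarrow> bnd (of_int (sign p) * h) C e"
  unfolding bnd_def sign_def by auto

lemma gauss2: "2 * (\<Sum>j<g. j) + g = (g::nat) * g"
  by (induction g) (auto simp: algebra_simps)

lemma sum_exp6_int: "6 * int (\<Sum>i<(g::nat). \<Sum>j<i. k + j) = int g * (int g - 1) * (int g + 3 * int k - 2)"
proof (induction g)
  case 0 then show ?case by simp
next
  case (Suc g)
  have s: "2 * int (\<Sum>j<g. j) = int g * (int g - 1)"
    using arg_cong[OF gauss2[of g], of int] by (simp add: algebra_simps)
  have "6 * int (\<Sum>i<Suc g. \<Sum>j<i. k + j) = 6 * int (\<Sum>i<g. \<Sum>j<i. k + j) + 6 * int g * int k + 3 * (2 * int (\<Sum>j<g. j))"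
    by (simp add: sum.distrib algebra_simps)
  also have "\<dots> = int (Suc g) * (int (Suc g) - 1) * (int (Suc g) + 3 * int k - 2)"
    unfolding s Suc.IH by (simp add: algebra_simps)
  finally show ?case .
qed

lemma sum_exp6: "(k::nat) \<ge> 1 \<Longrightarrow> (\<Sum>i<(g::nat). \<Sum>j<i. k + j) = g * (g - 1) * (g + 3 * k - 2) div 6"
proof -
  assume k: "k \<ge> 1"
  have "int (g * (g - 1) * (g + 3 * k - 2)) = int g * (int g - 1) * (int g + 3 * int k - 2)"
  proof (cases g)
    case 0 then show ?thesis by simp
  next
    case (Suc n)
    obtain k' where k': "k = Suc k'" using k by (cases k) auto
    have "g + 3 * k - 2 = n + 3 * k' + 2" "g - 1 = n" using Suc k' by auto
    then show ?thesis using Suc k' by (simp add: algebra_simps)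
  qed
  then have "int (6 * (\<Sum>i<(g::nat). \<Sum>j<i. k + j)) = int (g * (g - 1) * (g + 3 * k - 2))"
    using sum_exp6_int[where g=g and k=k] by (simp only: of_nat_mult of_nat_numeral)
  then have "6 * (\<Sum>i<(g::nat). \<Sum>j<i. k + j) = g * (g - 1) * (g + 3 * k - 2)"
    using of_nat_eq_iff by blast
  then show ?thesis by simp
qed

lemma sum_exp2: "(g::nat) \<ge> 1 \<Longrightarrow> (k::nat) \<ge> 1 \<Longrightarrow> (\<Sum>i=0..<g. k + i) + (g - 1) = g * k - 1 + g * (g + 1) div 2"
proof -
  assume g: "g \<ge> 1" and k: "k \<ge> 1"
  have gs: "2 * (\<Sum>j<g. j) + g = g * g" by (rule gauss2)
  have "g * (g + 1) = 2 * ((\<Sum>j<g. j) + g)" using gs by (simp add: algebra_simps)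
  then have d: "g * (g + 1) div 2 = (\<Sum>j<g. j) + g" by simp
  have e: "(\<Sum>i=0..<g. k + i) = g * k + (\<Sum>j<g. j)"
    by (simp add: sum.distrib atLeast0LessThan)
  have gk: "g * k \<ge> 1" using g k by simp
  show ?thesis unfolding d e using g gk by simp
qed

theorem mainTheorem6:
  fixes g k :: nat and A :: real and f :: "nat \<Rightarrow> complex fps"
  assumes "g \<ge> 2" and "A \<ge> 1" and "k \<ge> 1"
    and "\<And>j. j < g \<Longrightarrow> order_of_magnitude (f j) A k"
  shows "order_of_magnitude (wronskian g f)
           (fact g * A ^ g * 2 ^ (g * (g - 1) * (g + 3 * k - 2) div 6))
           (g * k - 1 + g * (g + 1) div 2)"
proof -
  let ?M = "mat g g (\<lambda>(i, j). (fps_deriv ^^ i) (f j))"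
  let ?S = "{p. p permutes {0..<g}}"
  let ?C = "(\<Prod>i=0..<g. 2 ^ (\<Sum>j<i. k + j) * A)"
  let ?e = "(\<Sum>i=0..<g. k + i) + (g - 1)"
  have fb: "bnd (f j) A k" if "j < g" for j
    using assms(4)[OF that] unfolding order_of_magnitude_def bnd_def by auto
  have trm: "bnd (of_int (sign p) * (\<Prod>i=0..<g. ?M $$ (i, p i))) ?C ?e" if p: "p \<in> ?S" for p
  proof -
    have pi: "p i < g" if "i < g" for i
      using p that by (auto dest: permutes_in_image)
    have "bnd (\<Prod>i=0..<g. ?M $$ (i, p i)) ?C ?e"
    proof (rule bnd_prod)
      fix i assume i: "i < g"
      have "?M $$ (i, p i) = (fps_deriv ^^ i) (f (p i))" using i pi[OF i] by simp
      then show "bnd (?M $$ (i, p i)) (2 ^ (\<Sum>j<i. k + j) * A) (k + i)"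
        using bnd_iter[OF fb[OF pi[OF i]]] by simp
    qed (use assms in auto)
    then show ?thesis by (rule bnd_sign)
  qed
  have C0: "?C \<ge> 0" using assms by (auto intro: prod_nonneg)
  have card: "card ?S = fact g"
    using card_permutations[of "{0..<g}" g] by simp
  have W: "wronskian g f = (\<Sum>p\<in>?S. of_int (sign p) * (\<Prod>i=0..<g. ?M $$ (i, p i)))"
    unfolding wronskian_def det_def by simp
  have "bnd (wronskian g f) (real (card ?S) * ?C) ?e"
    unfolding W by (rule bnd_sum) (use trm C0 finite_permutations in auto)
  moreover have "?C = A ^ g * 2 ^ (\<Sum>i<g. \<Sum>j<i. k + j)"
    by (simp add: prod.distrib power_sum atLeast0LessThan)
  moreover have "(\<Sum>i<g. \<Sum>j<i. k + j) = g * (g - 1) * (g + 3 * k - 2) div 6"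
    using sum_exp6[of k g] assms by simp
  moreover have "?e = g * k - 1 + g * (g + 1) div 2" using sum_exp2[of g k] assms by simp
  ultimately have B: "bnd (wronskian g f) (fact g * A ^ g * 2 ^ (g * (g - 1) * (g + 3 * k - 2) div 6))
           (g * k - 1 + g * (g + 1) div 2)"
    using card by (simp add: mult.assoc)
  have "fact g * A ^ g * 2 ^ (g * (g - 1) * (g + 3 * k - 2) div 6) \<ge> (1::real)"
  proof -
    have 1: "(1::real) \<le> fact g" by simp
    have 2: "1 \<le> A ^ g" using assms by simp
    have 3: "(1::real) \<le> 2 ^ (g * (g - 1) * (g + 3 * k - 2) div 6)" by simp
    have "(1::real) * 1 \<le> fact g * A ^ g" by (rule mult_mono[OF 1 2]) auto
    then have 4: "1 \<le> fact g * A ^ g" by simp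
    have "(1::real) * 1 \<le> (fact g * A ^ g) * 2 ^ (g * (g - 1) * (g + 3 * k - 2) div 6)"
      by (rule mult_mono[OF 4 3]) (use 4 in auto)
    then show ?thesis by simp
  qed
  moreover have "g * k - 1 + g * (g + 1) div 2 \<ge> 1"
    using assms by (cases g) auto
  ultimately show ?thesis using B unfolding order_of_magnitude_def bnd_def by auto
qed

end
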